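(* Let $0<\alpha<1/2$ and $\alpha':=\alpha+\frac12$. Define $C_1=\Gamma(\alpha-\frac12)/\sqrt\pi$ and for $k\ge2$ \[ C_k=\frac14\sum_{j=1}^{k-1}\binom kjC_jC_{k-j}+kC_{k-1}\frac{\Gamma(k\alpha+\frac k2-1)}{\Gamma((k-1)\alpha+\frac k2-1)}. \] Then there exists a constant $A<\infty$ depending only on $\alpha$ such that $|C_k/k!|\le A^kk^{\alpha'k}$ for all $k\ge1$.
   Context: $\Gamma$ is Euler's gamma function. *)

theory Defs
  imports "HOL-Analysis.Analysis"
begin

text \<open>The sequence C_k (k >= 1) from the paper, depending on the parameter alpha.
  The value at k = 0 is irrelevant and set to 0.\<close>
fun Cseq :: "real \<Rightarrow> nat \<Rightarrow> real" where
  "Cseq a 0 = 0"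
| "Cseq a (Suc 0) = Gamma (a - 1/2) / sqrt pi"
| "Cseq a (Suc (Suc n)) =
     (let k = Suc (Suc n) in
       (1/4) * (\<Sum>j\<in>{1..<k}. real (k choose j) * Cseq a j * Cseq a (k - j))
       + real k * Cseq a (k - 1) *
         (Gamma (real k * a + real k / 2 - 1) / Gamma ((real k - 1) * a + real k / 2 - 1)))"

end

theory Submission imports Defs begin

lemma gamma_ratio:
  fixes x a :: real
  assumes "x > 0" "0 \<le> a" "a \<le> 1"
  shows "Gamma (x + a) \<le> Gamma x * x powr a"
proof -
  have "(ln \<circ> Gamma) ((1 - a) *\<^sub>R x + a *\<^sub>R (x + 1)) \<le> (1 - a) * (ln \<circ> Gamma) x + a * (ln \<circ> Gamma) (x + 1)"
    using assms by (intro convex_onD[OF log_convex_Gamma_real]) auto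
  moreover have "(1 - a) *\<^sub>R x + a *\<^sub>R (x + 1) = x + a" by (simp add: algebra_simps)
  moreover have "Gamma (x + 1) = x * Gamma x"
  proof -
    have "x \<notin> \<int>\<^sub>\<le>\<^sub>0" using assms by (auto elim!: nonpos_Ints_cases)
    then show ?thesis by (rule Gamma_plus1)
  qed
  moreover have gp: "Gamma x > 0" using assms by simp
  ultimately have "ln (Gamma (x + a)) \<le> (1 - a) * ln (Gamma x) + a * ln (x * Gamma x)" by simp
  also have "\<dots> = ln (Gamma x) + a * ln x" using ln_mult_pos[OF assms(1) gp] by (simp add: algebra_simps)
  finally have "exp (ln (Gamma (x + a))) \<le> exp (ln (Gamma x) + a * ln x)" by simp
  then show ?thesis using assms by (simp add: exp_add powr_def mult.commute)
qed

lemma binom_sqrt: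
  assumes "2 * j \<le> k"
  shows "(4/3::real) ^ j \<le> sqrt (real (k choose j))"
proof (cases "j = 0")
  case True then show ?thesis by simp
next
  case False
  have "((4/3::real) ^ j)^2 = (16/9) ^ j" by (simp add: power_mult[symmetric] power_mult_distrib[symmetric] mult.commute power2_eq_square power_mult_distrib)
  also have "\<dots> \<le> 2 ^ j" by (intro power_mono) auto
  also have "\<dots> \<le> (real k / real j) ^ j"
    using assms False by (intro power_mono) (auto simp: field_simps)
  also have "\<dots> \<le> real (k choose j)" using assms by (intro binomial_ge_n_over_k_pow_k) auto
  finally show ?thesis by (simp add: real_le_rsqrt)
qed

lemma binom_inv:
  fixes b :: real
  assumes "1 \<le> j" "j < k" "1/2 \<le> b"
  shows "1 / (real (k choose j)) powr b \<le> (3/4) ^ j + (3/4) ^ (k - j)"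
proof -
  have pos: "real (k choose j) \<ge> 1" using assms by (simp add: Suc_leI)
  have "sqrt (real (k choose j)) = real (k choose j) powr (1/2)" using pos by (simp add: powr_half_sqrt)
  also have "\<dots> \<le> real (k choose j) powr b" using pos assms by (intro powr_mono) auto
  finally have s: "sqrt (real (k choose j)) \<le> real (k choose j) powr b" .
  have "\<exists>i. (i = j \<or> i = k - j) \<and> 2 * i \<le> k \<and> k choose i = k choose j"
  proof (cases "2 * j \<le> k")
    case True then show ?thesis by (intro exI[of _ j]) auto
  next
    case False then show ?thesis using assms by (intro exI[of _ "k - j"]) (auto simp: binomial_symmetric[symmetric])
  qed
  then obtain i where i: "i = j \<or> i = k - j" "2 * i \<le> k" "k choose i = k choose j" by blast
  have "(4/3::real) ^ i \<le> real (k choose j) powr b" using binom_sqrt[OF i(2)] i(3) s by simp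
  hence "1 / (real (k choose j)) powr b \<le> 1 / (4/3::real) ^ i"
    using pos assms by (intro divide_left_mono mult_pos_pos) auto
  also have "\<dots> = (3/4) ^ i" by (simp add: power_divide)
  also have "\<dots> \<le> (3/4) ^ j + (3/4) ^ (k - j)" using i(1) by auto
  finally show ?thesis .
qed

lemma geom_sum: "(\<Sum>j\<in>{1..<k}. ((3/4::real) ^ j + (3/4) ^ (k - j))) \<le> 8"
proof -
  have g: "(\<Sum>i<k. (3/4::real) ^ i) \<le> 4"
    by (simp add: sum_gp_strict)
  have a: "(\<Sum>j\<in>{1..<k}. (3/4::real) ^ j) \<le> (\<Sum>i<k. (3/4::real) ^ i)"
    by (intro sum_mono2) auto
  have "(\<Sum>j\<in>{1..<k}. (3/4::real) ^ (k - j)) = (\<Sum>i\<in>{1..<k}. (3/4::real) ^ i)"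
    by (rule sum.reindex_bij_witness[of _ "\<lambda>i. k - i" "\<lambda>i. k - i"]) auto
  with a g show ?thesis by (simp add: sum.distrib)
qed

definition Rk :: "real \<Rightarrow> nat \<Rightarrow> real" where
  "Rk a k = Gamma (real k * a + real k / 2 - 1) / Gamma ((real k - 1) * a + real k / 2 - 1)"

lemma c_rec:
  assumes "k \<ge> 2"
  shows "Cseq a k / fact k = 1/4 * (\<Sum>j\<in>{1..<k}. (Cseq a j / fact j) * (Cseq a (k-j) / fact (k-j)))
          + Cseq a (k-1) / fact (k-1) * Rk a k"
proof -
  obtain n where n: "k = Suc (Suc n)" using assms by (metis add_2_eq_Suc le_Suc_ex)
  have e: "Cseq a k = 1/4 * (\<Sum>j\<in>{1..<k}. real (k choose j) * Cseq a j * Cseq a (k - j))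
     + real k * Cseq a (k - 1) * Rk a k"
    unfolding n Rk_def by (simp only: Cseq.simps Let_def)
  have s: "(\<Sum>j\<in>{1..<k}. real (k choose j) * Cseq a j * Cseq a (k - j)) / fact k
      = (\<Sum>j\<in>{1..<k}. (Cseq a j / fact j) * (Cseq a (k-j) / fact (k-j)))"
    unfolding sum_divide_distrib
  proof (rule sum.cong)
    fix j assume "j \<in> {1..<k}"
    then have "j \<le> k" by auto
    then show "real (k choose j) * Cseq a j * Cseq a (k - j) / fact k = (Cseq a j / fact j) * (Cseq a (k-j) / fact (k-j))"
      by (simp add: binomial_fact field_simps)
  qed simp
  have f: "fact k = real k * fact (k - 1)" using assms by (simp add: fact_reduce)
  have "real k * Cseq a (k - 1) * Rk a k / fact k = Cseq a (k-1) / fact (k-1) * Rk a k"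
    using assms unfolding f by (simp add: field_simps)
  then show ?thesis unfolding e using s by (simp add: add_divide_distrib)
qed

lemma Rk_bound:
  assumes "0 < a" "a < 1/2" "k \<ge> 2"
  shows "0 \<le> Rk a k \<and> Rk a k \<le> real k powr a"
proof -
  define x where "x = (real k - 1) * a + real k / 2 - 1"
  have k2: "real k \<ge> 2" using assms by simp
  have "(real k - 1) * a \<ge> a" using assms k2 by (simp add: algebra_simps)
  then have xpos: "x > 0" using k2 assms unfolding x_def by linarith
  have "(real k - 1) * a \<le> (real k - 1) / 2" using assms k2 mult_left_mono[of a "1/2" "real k - 1"] by simp
  then have xk: "x \<le> real k" unfolding x_def by (simp add: field_simps)
  have e: "real k * a + real k / 2 - 1 = x + a" unfolding x_def by (simp add: algebra_simps)
  have "Rk a k = Gamma (x + a) / Gamma x" unfolding Rk_def e x_def ..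
  moreover have "Gamma (x + a) \<le> Gamma x * x powr a" using gamma_ratio[of x a] xpos assms by simp
  moreover have "Gamma x > 0" "Gamma (x + a) > 0" using xpos assms by auto
  moreover have "x powr a \<le> real k powr a" using xpos xk assms by (intro powr_mono2) auto
  ultimately have "Gamma (x + a) / Gamma x \<le> x powr a" "0 \<le> Gamma (x + a) / Gamma x"
    by (auto simp: pos_divide_le_eq mult.commute)
  with \<open>x powr a \<le> real k powr a\<close> \<open>Rk a k = Gamma (x + a) / Gamma x\<close> show ?thesis by linarith
qed

lemma main_bound:
  fixes \<alpha> :: real
  assumes a0: "0 < \<alpha>" and a1: "\<alpha> < 1/2"
  defines "A \<equiv> max 2 (4 * \<bar>Cseq \<alpha> 1\<bar>)"
  shows "k \<ge> 1 \<Longrightarrow> \<bar>Cseq \<alpha> k / fact k\<bar> \<le> A ^ k * (fact k) powr (\<alpha> + 1/2) / 4"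
proof (induction k rule: less_induct)
  case (less k)
  define b where "b = \<alpha> + 1/2"
  define c where "c = (\<lambda>j. Cseq \<alpha> j / fact j)"
  define F where "F = (\<lambda>j::nat. (fact j :: real) powr b)"
  have A2: "A \<ge> 2" unfolding A_def by simp
  have Fpos: "F j > 0" for j unfolding F_def by simp
  show ?case
  proof (cases "k = 1")
    case True
    have "4 * \<bar>Cseq \<alpha> 1\<bar> \<le> A" unfolding A_def by (rule max.cobounded2)
    then show ?thesis using True by (simp del: Cseq.simps)
  next
    case False
    with less.prems have k2: "k \<ge> 2" by simp
    have IH: "\<bar>c j\<bar> \<le> A ^ j * F j / 4" if "1 \<le> j" "j < k" for j
      using less.IH[OF that(2,1)] unfolding c_def F_def b_def .
    have trm: "\<bar>c j\<bar> * \<bar>c (k - j)\<bar> \<le> A ^ k * F k / 16 * ((3/4) ^ j + (3/4) ^ (k - j))"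
      if j: "j \<in> {1..<k}" for j
    proof -
      have "\<bar>c j\<bar> * \<bar>c (k - j)\<bar> \<le> (A ^ j * F j / 4) * (A ^ (k - j) * F (k - j) / 4)"
        using j A2 Fpos[of j] by (intro mult_mono IH) auto
      also have "\<dots> = A ^ k * (F j * F (k - j)) / 16"
        using j by (simp add: power_add[symmetric] field_simps)
      also have "F j * F (k - j) = F k * (1 / real (k choose j) powr b)"
      proof -
        have "fact j * fact (k - j) = (fact k :: real) / real (k choose j)"
          using j by (simp add: binomial_fact)
        then show ?thesis unfolding F_def
          by (simp add: powr_mult[symmetric] powr_divide)
      qed
      also have "A ^ k * (F k * (1 / real (k choose j) powr b)) / 16
           \<le> A ^ k * (F k * ((3/4) ^ j + (3/4) ^ (k - j))) / 16"
        using j A2 Fpos[of k] a0 unfolding b_def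
        by (intro divide_right_mono mult_left_mono binom_inv) auto
      finally show ?thesis by simp
    qed
    have conv: "(\<Sum>j\<in>{1..<k}. \<bar>c j\<bar> * \<bar>c (k - j)\<bar>) \<le> A ^ k * F k / 2"
    proof -
      have "(\<Sum>j\<in>{1..<k}. \<bar>c j\<bar> * \<bar>c (k - j)\<bar>)
          \<le> (\<Sum>j\<in>{1..<k}. A ^ k * F k / 16 * ((3/4) ^ j + (3/4) ^ (k - j)))"
        by (intro sum_mono trm)
      also have "\<dots> = A ^ k * F k / 16 * (\<Sum>j\<in>{1..<k}. ((3/4) ^ j + (3/4) ^ (k - j)))"
        by (simp add: sum_distrib_left)
      also have "\<dots> \<le> A ^ k * F k / 16 * 8"
        using A2 Fpos[of k] by (intro mult_left_mono geom_sum) auto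
      finally show ?thesis by (simp add: mult.commute)
    qed
    have R: "0 \<le> Rk \<alpha> k" "Rk \<alpha> k \<le> real k powr \<alpha>" using Rk_bound[OF a0 a1 k2] by auto
    have Fk: "F k = real k powr b * F (k - 1)"
    proof -
      have "(fact k :: real) = real k * fact (k - 1)" using k2 by (simp add: fact_reduce)
      then show ?thesis unfolding F_def by (simp add: powr_mult)
    qed
    have kb: "real k powr \<alpha> \<le> real k powr b" using k2 unfolding b_def by (intro powr_mono) auto
    have Ak: "A ^ k = A * A ^ (k - 1)" using k2 by (cases k) auto
    have lin: "\<bar>c (k - 1)\<bar> * Rk \<alpha> k \<le> A ^ k * F k / 8"
    proof -
      have "\<bar>c (k - 1)\<bar> * Rk \<alpha> k \<le> (A ^ (k - 1) * F (k - 1) / 4) * real k powr b"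
        using IH[of "k - 1"] k2 R kb A2 Fpos[of "k - 1"] by (intro mult_mono) (auto intro: order_trans)
      also have "\<dots> = A ^ (k - 1) * F k / 4" unfolding Fk by simp
      also have "\<dots> \<le> A ^ k * F k / 8" unfolding Ak using A2 Fpos[of k]
        by (simp add: field_simps)
      finally show ?thesis .
    qed
    have "c k = 1/4 * (\<Sum>j\<in>{1..<k}. c j * c (k - j)) + c (k - 1) * Rk \<alpha> k"
      unfolding c_def using c_rec[OF k2] by simp
    then have "\<bar>c k\<bar> \<le> 1/4 * (\<Sum>j\<in>{1..<k}. \<bar>c j\<bar> * \<bar>c (k - j)\<bar>) + \<bar>c (k - 1)\<bar> * Rk \<alpha> k"
    proof -
      assume e: "c k = 1/4 * (\<Sum>j\<in>{1..<k}. c j * c (k - j)) + c (k - 1) * Rk \<alpha> k"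
      have "\<bar>\<Sum>j\<in>{1..<k}. c j * c (k - j)\<bar> \<le> (\<Sum>j\<in>{1..<k}. \<bar>c j\<bar> * \<bar>c (k - j)\<bar>)"
        by (rule order_trans[OF sum_abs]) (simp add: abs_mult)
      have "\<bar>c k\<bar> \<le> \<bar>1/4 * (\<Sum>j\<in>{1..<k}. c j * c (k - j))\<bar> + \<bar>c (k - 1) * Rk \<alpha> k\<bar>"
        unfolding e by (rule abs_triangle_ineq)
      also have "\<dots> = 1/4 * \<bar>\<Sum>j\<in>{1..<k}. c j * c (k - j)\<bar> + \<bar>c (k - 1)\<bar> * Rk \<alpha> k"
        using R(1) by (simp add: abs_mult)
      finally show ?thesis using \<open>\<bar>\<Sum>j\<in>{1..<k}. c j * c (k - j)\<bar> \<le> _\<close> by linarith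
    qed
    also have "\<dots> \<le> A ^ k * F k / 4" using conv lin by simp
    finally show ?thesis unfolding c_def F_def b_def .
  qed
qed

theorem lemma3p4:
  fixes \<alpha> :: real
  assumes "0 < \<alpha>" and "\<alpha> < 1/2"
  shows "\<exists>A::real. \<forall>k::nat. k \<ge> 1 \<longrightarrow>
           \<bar>Cseq \<alpha> k / fact k\<bar> \<le> A ^ k * (real k) powr ((\<alpha> + 1/2) * real k)"
proof (intro exI allI impI)
  define A where "A = max 2 (4 * \<bar>Cseq \<alpha> 1\<bar>)"
  fix k :: nat assume k: "k \<ge> 1"
  have A0: "A \<ge> 0" unfolding A_def by simp
  have "\<bar>Cseq \<alpha> k / fact k\<bar> \<le> A ^ k * (fact k) powr (\<alpha> + 1/2) / 4"
    using main_bound[OF assms k] unfolding A_def .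
  also have "\<dots> \<le> A ^ k * (fact k) powr (\<alpha> + 1/2)" using A0 by simp
  also have "(fact k :: real) powr (\<alpha> + 1/2) \<le> (real k ^ k) powr (\<alpha> + 1/2)"
    using assms fact_le_power[of k] by (intro powr_mono2) auto
  also have "(real k ^ k) powr (\<alpha> + 1/2) = real k powr ((\<alpha> + 1/2) * real k)"
    using k by (simp add: powr_realpow[symmetric] powr_powr mult.commute)
  finally show "\<bar>Cseq \<alpha> k / fact k\<bar> \<le> A ^ k * real k powr ((\<alpha> + 1 / 2) * real k)"
    using A0 by (simp add: mult_left_mono)
qed

end
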